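(* For every integer $s \geq 1$, $$\mathsf {Brac}_{2,s}=\mathsf {Brac}_{2}= \left\{ \big( (p, 1-p), (1-p,p) \big) \, : \, p\in[0,1]\right\}.$$
   Context: $\Delta_d=\{\alpha\in\mathbb R^d:\alpha_i\ge0,\ \sum_i\alpha_i=1\}$. $\mathsf{Brac}_d=\{(\alpha,\beta)\in\Delta_d^2:\ \forall i,\ \sqrt{\alpha_i\beta_i}\le\sum_{j\ne i}\sqrt{\alpha_j\beta_j}\}$. For $s\ge1$, $\mathsf{Brac}_{d,s}$ is the set of $(\alpha,\beta)\in\Delta_d^2$ for which there exist $A_1,\dots,A_d,B_1,\dots,B_d\in M_s(\mathbb C)$ with $\sum_i A_iA_i^*=\sum_iB_iB_i^*=I_s$, $\sum_iA_iB_i^*=0$, and $\tfrac1s\|A_i\|_F^2=\alpha_i$, $\tfrac1s\|B_i\|_F^2=\beta_i$ for all $i$, where $\|X\|_F=\operatorname{Tr}(XX^* )^{1/2}$. *)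

theory Defs
  imports "HOL-Analysis.Analysis"
begin

definition prob_simplex :: "nat \<Rightarrow> real list set" where
  "prob_simplex d = {a. length a = d \<and> (\<forall>i<d. 0 \<le> a ! i) \<and> (\<Sum>i<d. a ! i) = 1}"

definition Brac :: "nat \<Rightarrow> (real list \<times> real list) set" where
  "Brac d = {(a, b). a \<in> prob_simplex d \<and> b \<in> prob_simplex d \<and>
     (\<forall>i<d. sqrt (a ! i * b ! i) \<le> (\<Sum>j\<in>{..<d} - {i}. sqrt (a ! j * b ! j)))}"

definition cstar :: "complex^'n^'n \<Rightarrow> complex^'n^'n" where
  "cstar A = (\<chi> i j. cnj (A $ j $ i))"

definition frob_sq :: "complex^'n^'n \<Rightarrow> real" where
  "frob_sq X = Re (trace (X ** cstar X))"

text \<open>Brac_{d,s}, where s = CARD('s) is the matrix size given by the finite index type 's.\<close>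
definition BracS :: "nat \<Rightarrow> 's::finite itself \<Rightarrow> (real list \<times> real list) set" where
  "BracS d _ = {(a, b). a \<in> prob_simplex d \<and> b \<in> prob_simplex d \<and>
     (\<exists>A B :: nat \<Rightarrow> complex^'s^'s.
        (\<Sum>i<d. A i ** cstar (A i)) = mat 1 \<and>
        (\<Sum>i<d. B i ** cstar (B i)) = mat 1 \<and>
        (\<Sum>i<d. A i ** cstar (B i)) = 0 \<and>
        (\<forall>i<d. frob_sq (A i) / real CARD('s) = a ! i \<and>
                frob_sq (B i) / real CARD('s) = b ! i))}"

end

theory Submission
  imports Defs
begin

lemma sum_UNIV_Plus:
  "(\<Sum>x\<in>(UNIV::('a::finite + 'b::finite) set). g x) = (\<Sum>x\<in>UNIV. g (Inl x)) + (\<Sum>x\<in>UNIV. g (Inr x))"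
  using sum.Plus[of "UNIV::'a set" "UNIV::'b set" g] by (simp add: comp_def)

lemma frob_sq_eq: "frob_sq (X::complex^'n^'n) = (\<Sum>i\<in>UNIV. \<Sum>k\<in>UNIV. (cmod (X$i$k))\<^sup>2)"
proof -
  have "trace (X ** cstar X) = (\<Sum>i\<in>UNIV. \<Sum>k\<in>UNIV. complex_of_real ((cmod (X$i$k))\<^sup>2))"
    unfolding trace_def matrix_matrix_mult_def cstar_def
    by (simp add: complex_norm_square[symmetric] del: of_real_power)
  then show ?thesis unfolding frob_sq_def by (simp add: Re_sum)
qed

lemma list2: "length a = 2 \<Longrightarrow> a = [a!0, a!1]"
  by (cases a; cases "tl a"; auto simp: numeral_2_eq_2)

lemma simplex2: "a \<in> prob_simplex 2 \<longleftrightarrow> (\<exists>x. 0 \<le> x \<and> x \<le> 1 \<and> a = [x, 1 - x])"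
proof
  assume h: "a \<in> prob_simplex 2"
  then have l: "length a = 2" and n: "0 \<le> a!0" "0 \<le> a!1" and s: "a!0 + a!1 = 1"
    by (auto simp: prob_simplex_def numeral_2_eq_2)
  show "\<exists>x. 0 \<le> x \<and> x \<le> 1 \<and> a = [x, 1 - x]"
  proof (intro exI[of _ "a!0"] conjI)
    have "a!1 = 1 - a!0" using s by simp
    then show "a = [a!0, 1 - a!0]" using list2[OF l] by simp
  qed (use n s in auto)
next
  assume "\<exists>x. 0 \<le> x \<and> x \<le> 1 \<and> a = [x, 1 - x]"
  then show "a \<in> prob_simplex 2" by (auto simp: prob_simplex_def numeral_2_eq_2 less_Suc_eq)
qed

lemma brac2: "(a, b) \<in> Brac 2 \<longleftrightarrow> (\<exists>p. 0 \<le> p \<and> p \<le> 1 \<and> a = [p, 1 - p] \<and> b = [1 - p, p])"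
proof
  assume h: "(a, b) \<in> Brac 2"
  then obtain x y where x: "0 \<le> x" "x \<le> 1" "a = [x, 1 - x]" and y: "0 \<le> y" "y \<le> 1" "b = [y, 1 - y]"
    by (auto simp: Brac_def simplex2)
  have c: "\<forall>i<2. sqrt (a ! i * b ! i) \<le> (\<Sum>j\<in>{..<2} - {i}. sqrt (a ! j * b ! j))"
    using h by (auto simp: Brac_def)
  have e1: "{..<2::nat} - {0} = {1}" and e2: "{..<2::nat} - {Suc 0} = {0}" by auto
  have "sqrt (x*y) \<le> sqrt ((1-x)*(1-y))" "sqrt ((1-x)*(1-y)) \<le> sqrt (x*y)"
    using c[rule_format, of 0] c[rule_format, of 1] x y by (auto simp: e1 e2)
  then have "x*y = (1-x)*(1-y)" by (simp add: real_sqrt_le_iff) 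
  then have "y = 1 - x" by (simp add: algebra_simps)
  then show "\<exists>p. 0 \<le> p \<and> p \<le> 1 \<and> a = [p, 1 - p] \<and> b = [1 - p, p]" using x y by auto
next
  assume "\<exists>p. 0 \<le> p \<and> p \<le> 1 \<and> a = [p, 1 - p] \<and> b = [1 - p, p]"
  then obtain p where p: "0 \<le> p" "p \<le> 1" "a = [p, 1 - p]" "b = [1 - p, p]" by auto
  have e1: "{..<2::nat} - {0} = {1}" and e2: "{..<2::nat} - {Suc 0} = {0}" by auto
  have "\<forall>i<2. sqrt (a ! i * b ! i) \<le> (\<Sum>j\<in>{..<2} - {i}. sqrt (a ! j * b ! j))"
  proof (intro allI impI)
    fix i :: nat assume "i < 2"
    then have "i = 0 \<or> i = 1" by auto
    then show "sqrt (a ! i * b ! i) \<le> (\<Sum>j\<in>{..<2} - {i}. sqrt (a ! j * b ! j))"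
      using p by (auto simp: e1 e2 mult.commute)
  qed
  moreover have "a \<in> prob_simplex 2" "b \<in> prob_simplex 2" using p by (auto simp: simplex2)
  ultimately show "(a, b) \<in> Brac 2" by (auto simp: Brac_def)
qed


lemma key:
  fixes A0 A1 B0 B1 :: "complex^'s::finite^'s"
  assumes hA: "A0 ** cstar A0 + A1 ** cstar A1 = mat 1"
    and hB: "B0 ** cstar B0 + B1 ** cstar B1 = mat 1"
    and hAB: "A0 ** cstar B0 + A1 ** cstar B1 = 0"
  shows "frob_sq A0 + frob_sq B0 = real CARD('s)"
proof -
  define U :: "complex^('s+'s)^('s+'s)" where
    "U = (\<chi> r c. case r of Inl i \<Rightarrow> (case c of Inl j \<Rightarrow> A0$i$j | Inr j \<Rightarrow> A1$i$j)
                    | Inr i \<Rightarrow> (case c of Inl j \<Rightarrow> B0$i$j | Inr j \<Rightarrow> B1$i$j))"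
  have eA: "(\<Sum>k\<in>UNIV. A0$i$k * cnj (A0$j$k)) + (\<Sum>k\<in>UNIV. A1$i$k * cnj (A1$j$k)) = (if i = j then 1 else 0)" for i j
    using arg_cong[OF hA, of "\<lambda>M. M$i$j"] by (simp add: matrix_matrix_mult_def cstar_def mat_def)
  have eB: "(\<Sum>k\<in>UNIV. B0$i$k * cnj (B0$j$k)) + (\<Sum>k\<in>UNIV. B1$i$k * cnj (B1$j$k)) = (if i = j then 1 else 0)" for i j
    using arg_cong[OF hB, of "\<lambda>M. M$i$j"] by (simp add: matrix_matrix_mult_def cstar_def mat_def)
  have eAB: "(\<Sum>k\<in>UNIV. A0$i$k * cnj (B0$j$k)) + (\<Sum>k\<in>UNIV. A1$i$k * cnj (B1$j$k)) = 0" for i j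
    using arg_cong[OF hAB, of "\<lambda>M. M$i$j"] by (simp add: matrix_matrix_mult_def cstar_def)
  have eBA: "(\<Sum>k\<in>UNIV. B0$i$k * cnj (A0$j$k)) + (\<Sum>k\<in>UNIV. B1$i$k * cnj (A1$j$k)) = 0" for i j
  proof -
    have "cnj ((\<Sum>k\<in>UNIV. A0$j$k * cnj (B0$i$k)) + (\<Sum>k\<in>UNIV. A1$j$k * cnj (B1$i$k))) = 0"
      using eAB[of j i] by simp
    then show ?thesis by (simp add: mult.commute)
  qed
  have "U ** cstar U = mat 1"
  proof -
    have "(U ** cstar U) $ r $ c = mat 1 $ r $ c" for r c
    proof (cases r; cases c)
      fix i j assume "r = Inl i" "c = Inl j"
      then show ?thesis unfolding matrix_matrix_mult_def cstar_def U_def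
        by (simp add: sum_UNIV_Plus eA mat_def)
    next
      fix i j assume "r = Inl i" "c = Inr j"
      then show ?thesis unfolding matrix_matrix_mult_def cstar_def U_def
        by (simp add: sum_UNIV_Plus eAB mat_def)
    next
      fix i j assume "r = Inr i" "c = Inl j"
      then show ?thesis unfolding matrix_matrix_mult_def cstar_def U_def
        by (simp add: sum_UNIV_Plus eBA mat_def)
    next
      fix i j assume "r = Inr i" "c = Inr j"
      then show ?thesis unfolding matrix_matrix_mult_def cstar_def U_def
        by (simp add: sum_UNIV_Plus eB mat_def)
    qed
    then show ?thesis by (simp add: vec_eq_iff)
  qed
  then have "cstar U ** U = mat 1" using matrix_left_right_inverse by blast
  then have "(cstar U ** U) $ Inl j $ Inl j = 1" for j by (simp add: mat_def)
  then have "(\<Sum>i\<in>UNIV. complex_of_real ((cmod (A0$i$j))\<^sup>2)) + (\<Sum>i\<in>UNIV. complex_of_real ((cmod (B0$i$j))\<^sup>2)) = 1" for j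
    by (simp add: matrix_matrix_mult_def cstar_def U_def sum_UNIV_Plus complex_norm_square mult.commute del: of_real_power)
  then have r: "(\<Sum>i\<in>UNIV. (cmod (A0$i$j))\<^sup>2) + (\<Sum>i\<in>UNIV. (cmod (B0$i$j))\<^sup>2) = 1" for j
    by (metis (no_types) of_real_add of_real_eq_1_iff of_real_sum)
  have "frob_sq A0 + frob_sq B0 = (\<Sum>j\<in>UNIV. (\<Sum>i\<in>UNIV. (cmod (A0$i$j))\<^sup>2) + (\<Sum>i\<in>UNIV. (cmod (B0$i$j))\<^sup>2))"
  proof -
    have s1: "frob_sq X = (\<Sum>j\<in>UNIV. \<Sum>i\<in>UNIV. (cmod (X$i$j))\<^sup>2)" for X :: "complex^'s^'s"
      unfolding frob_sq_eq by (rule sum.swap)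
    show ?thesis by (simp only: s1 sum.distrib)
  qed
  also have "\<dots> = real CARD('s)" using r by simp
  finally show ?thesis .
qed

lemma mat_mult_mat: "(mat c :: complex^'n::finite^'n) ** mat d = mat (c * d)"
proof -
  have e: "(mat c :: complex^'n::finite^'n) $ i $ k * (mat d :: complex^'n::finite^'n) $ k $ j
     = (if k = i then (if i = j then c * d else 0) else 0)" for i j k
    by (simp add: mat_def)
  show ?thesis unfolding vec_eq_iff matrix_matrix_mult_def
    by (simp only: vec_lambda_beta e sum.delta' finite) (simp add: mat_def)
qed

lemma cstar_mat: "cstar (mat c :: complex^'n::finite^'n) = mat (cnj c)"
  by (simp add: vec_eq_iff cstar_def mat_def)

lemma mat_add_mat: "(mat c :: complex^'n::finite^'n) + mat d = mat (c + d)"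
  by (simp add: vec_eq_iff mat_def)

lemma frob_mat: "frob_sq (mat c :: complex^'n::finite^'n) = (cmod c)\<^sup>2 * real CARD('n)"
proof -
  have e: "(cmod ((mat c :: complex^'n::finite^'n) $ i $ k))\<^sup>2 = (if k = i then (cmod c)\<^sup>2 else 0)" for i k
    by (simp add: mat_def)
  show ?thesis unfolding frob_sq_eq by (simp only: e sum.delta' finite) simp
qed

theorem proposition3p9:
  shows "BracS 2 TYPE('s::finite) = Brac 2 \<and>
         Brac 2 = {([p, 1 - p], [1 - p, p]) | p :: real. 0 \<le> p \<and> p \<le> 1}"
proof
  have two: "{..<2::nat} = {0, Suc 0}" by auto
  have cpos: "real CARD('s) > 0" by simp
  show "BracS 2 TYPE('s::finite) = Brac 2"
  proof
    show "BracS 2 TYPE('s) \<subseteq> Brac 2"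
    proof clarify
      fix a b assume h: "(a, b) \<in> BracS 2 TYPE('s)"
      then obtain x y where x: "0 \<le> x" "x \<le> 1" "a = [x, 1 - x]" and y: "0 \<le> y" "y \<le> 1" "b = [y, 1 - y]"
        by (auto simp: BracS_def simplex2)
      from h obtain A B :: "nat \<Rightarrow> complex^'s^'s" where
        hA: "(\<Sum>i<2. A i ** cstar (A i)) = mat 1" and
        hB: "(\<Sum>i<2. B i ** cstar (B i)) = mat 1" and
        hAB: "(\<Sum>i<2. A i ** cstar (B i)) = 0" and
        hf: "\<forall>i<2. frob_sq (A i) / real CARD('s) = a ! i \<and> frob_sq (B i) / real CARD('s) = b ! i"
        by (auto simp: BracS_def)
      have "frob_sq (A 0) + frob_sq (B 0) = real CARD('s)"
        by (rule key) (use hA hB hAB in \<open>simp_all add: two\<close>)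
      moreover have "frob_sq (A 0) / real CARD('s) = x" "frob_sq (B 0) / real CARD('s) = y"
        using hf x y by auto
      ultimately have "(x + y) * real CARD('s) = 1 * real CARD('s)" using cpos by (simp add: field_simps)
      then have "x + y = 1" using cpos by simp
      then show "(a, b) \<in> Brac 2" using x y by (auto simp: brac2)
    qed
  next
    show "Brac 2 \<subseteq> BracS 2 TYPE('s)"
    proof clarify
      fix a b assume "(a, b) \<in> Brac 2"
      then obtain p where p: "0 \<le> p" "p \<le> 1" "a = [p, 1 - p]" "b = [1 - p, p]"
        by (auto simp: brac2)
      define A :: "nat \<Rightarrow> complex^'s^'s" where
        "A i = mat (complex_of_real (if i = 0 then sqrt p else sqrt (1 - p)))" for i
      define B :: "nat \<Rightarrow> complex^'s^'s" where
        "B i = mat (complex_of_real (if i = 0 then sqrt (1 - p) else - sqrt p))" for i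
      have sp: "sqrt p * sqrt p = p" "sqrt (1-p) * sqrt (1-p) = 1 - p" using p by auto
      have "(\<Sum>i<2. A i ** cstar (A i)) = mat 1"
        unfolding two A_def using p
        by (simp add: mat_mult_mat cstar_mat mat_add_mat flip: of_real_mult of_real_add)
      moreover have "(\<Sum>i<2. B i ** cstar (B i)) = mat 1"
        unfolding two B_def using p
        by (simp add: mat_mult_mat cstar_mat mat_add_mat flip: of_real_mult of_real_add)
      moreover have "(\<Sum>i<2. A i ** cstar (B i)) = 0"
        unfolding two A_def B_def using p
        by (simp add: mat_mult_mat cstar_mat mat_add_mat mult.commute flip: of_real_mult of_real_add)
      moreover have "\<forall>i<2. frob_sq (A i) / real CARD('s) = a ! i \<and> frob_sq (B i) / real CARD('s) = b ! i"
      proof (intro allI impI)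
        fix i :: nat assume "i < 2"
        then have "i = 0 \<or> i = 1" by auto
        then show "frob_sq (A i) / real CARD('s) = a ! i \<and> frob_sq (B i) / real CARD('s) = b ! i"
          using p cpos by (auto simp: A_def B_def frob_mat)
      qed
      moreover have "a \<in> prob_simplex 2" "b \<in> prob_simplex 2" using p by (auto simp: simplex2)
      ultimately show "(a, b) \<in> BracS 2 TYPE('s)" unfolding BracS_def by blast
    qed
  qed
next
  show "Brac 2 = {([p, 1 - p], [1 - p, p]) | p :: real. 0 \<le> p \<and> p \<le> 1}"
    by (auto simp: brac2)
qed

end
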